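(* Let $n\ge2$ and let $\mathfrak G_n$, $\mathcal G_n$, $\iota_n$, $\mathcal N_{0,n}$, $z_g$, $U_m(z_g)$ and $\mathfrak H_{j,n}$ be as in the context. Let $m\ge1$ and let $K\in\{\mathfrak H_{j,n},\ \mathcal N_{0,n}\setminus\mathfrak H_{j,n}: j=0,\dots,2^n-2\}$. Set $$M_K=\Bigl(\bigcap_{g\in K}U_m(z_g)\Bigr)\setminus\bigcup_{h\in\mathcal N_{0,n}\setminus K}U_m(z_h).$$ Then $M_K=\bigcap_{g\in K}U_m(z_g)$.
   Context: Let $X=\{\mathbf 0,\mathbf 1\}$, $X^*$ the finite words (with empty word $\varnothing$), $X^\omega$ the infinite words with the product topology, $C(\eta)=\{\eta w:w\in X^\omega\}$, $\mathbf 1^m$ the word of $m$ ones and $\mathbf 1^\infty$ the infinite word of ones. Fix $n\ge2$, a primitive polynomial $f_n$ of degree $n$ over $\mathbb F_2$ with root $\alpha$ (so $\mathbb F_{2^n}=\mathbb F_2(\alpha)$, $\alpha$ generates $\mathbb F_{2^n}^*$), and $\operatorname{Tr}(\beta)=\beta+\beta^2+\dots+\beta^{2^{n-1}}\in\mathbb F_2$. $\mathfrak G_n$ is the group of automorphisms of the binary rooted tree $X^*$ generated by $a$ ($a\cdot(\mathbf 0w)=\mathbf 1w$, $a\cdot(\mathbf 1w)=\mathbf 0w$) and $\iota_n(\beta)$, $\beta\in\mathbb F_{2^n}$, where $\iota_n(\beta)\cdot(\mathbf 0w)=\mathbf 0(a^{\operatorname{Tr}(\beta)}\cdot w)$ and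 $\iota_n(\beta)\cdot(\mathbf 1w)=\mathbf 1(\iota_n(\alpha\beta)\cdot w)$; $\iota_n$ is an injective homomorphism of $(\mathbb F_{2^n},+)$ into $\mathfrak G_n$ and $e=\iota_n(0)$. Restrictions $g|_x$ are defined by $g\cdot(xw)=(g\cdot x)(g|_x\cdot w)$ and extended to words. Let $\mathcal N_{0,n}=\iota_n(\mathbb F_{2^n})$. For $j=0,\dots,2^n-2$ let $\mathfrak H_{j,n}=\iota_n(\{\beta:\operatorname{Tr}(\alpha^j\beta)=0\})$, a subgroup of order $2^{n-1}$. $\mathcal G_n$ is the groupoid of germs of the action of the inverse semigroup $\{(\eta,g,\mu):\eta,\mu\in X^*,g\in\mathfrak G_n\}\cup\{0\}$ on $X^\omega$, where $(\eta,g,\mu)$ maps $C(\mu)\to C(\eta)$ by $\mu w\mapsto\eta(g\cdot w)$: elements are germs $[(\eta,g,\mu),w]$ with $w\in C(\mu)$, and $[(\eta,g,\mu),w]=[(\eta',g',\mu'),w']$ iff $w=w'$ and there is a finite prefix $\nu$ of $w$ with $\nu=\mu\epsilon=\mu'\epsilon'$, $\eta(g\cdot\epsilon)=\eta'(g'\cdot\epsilon')$ and $g|_\epsilon=g'|_{\epsilon'}$. For $s=(\eta,g,\mu)$ and open $U\subseteq C(\mu)$ let $\Theta(s,U)=\{[s,w]:w\in U\}$; these are open bisections forming a basis of the topology. For $g\in\mathfrak G_n$ let $z_g=[(\varnothing,g,\varnothing),\mathbf 1^\infty]$ and $U_m(z_g)=\Theta((\varnothing,g,\varnothing),C(\mathbf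 1^m))$, a compact open bisection containing $z_g$. *)

theory Defs
  imports Main
begin

text \<open>Letters: False = 0, True = 1. Finite words: bool list.
  The field F_{2^n} is an abstract finite field 'f with 2^n elements; alpha is a
  generator of its multiplicative group (a root of the primitive polynomial f_n).\<close>

type_synonym fword = "bool list"
type_synonym iword = "nat \<Rightarrow> bool"
type_synonym aut = "fword \<Rightarrow> fword"

definition conc :: "fword \<Rightarrow> iword \<Rightarrow> iword" where
  "conc \<eta> w = (\<lambda>i. if i < length \<eta> then \<eta> ! i else w (i - length \<eta>))"

definition cyl :: "fword \<Rightarrow> iword set" where
  "cyl \<eta> = {conc \<eta> w | w. True}"

definition ones :: "nat \<Rightarrow> fword" where
  "ones m = replicate m True"

definition ipref :: "nat \<Rightarrow> iword \<Rightarrow> fword" where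
  "ipref k w = map w [0..<k]"

definition act_inf :: "aut \<Rightarrow> iword \<Rightarrow> iword" where
  "act_inf g w = (\<lambda>i. g (ipref (Suc i) w) ! i)"

definition restr :: "aut \<Rightarrow> fword \<Rightarrow> aut" where
  "restr g x = (\<lambda>v. drop (length x) (g (x @ v)))"

fun a_aut :: aut where
  "a_aut [] = []"
| "a_aut (x # w) = (\<not> x) # w"

text \<open>Absolute trace F_{2^n} \<rightarrow> F_2 (values 0 or 1 in the field).\<close>
definition tr :: "nat \<Rightarrow> 'f::field \<Rightarrow> 'f" where
  "tr n \<beta> = (\<Sum>i<n. \<beta> ^ (2 ^ i))"

fun iota :: "nat \<Rightarrow> 'f::field \<Rightarrow> 'f \<Rightarrow> aut" where
  "iota n \<alpha> \<beta> [] = []"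
| "iota n \<alpha> \<beta> (x # w) =
     (if x then True # iota n \<alpha> (\<alpha> * \<beta>) w
      else False # (if tr n \<beta> = 1 then a_aut w else w))"

inductive_set GG :: "nat \<Rightarrow> 'f::field \<Rightarrow> aut set" for n \<alpha> where
  GG_id: "id \<in> GG n \<alpha>"
| GG_a: "a_aut \<in> GG n \<alpha>"
| GG_iota: "iota n \<alpha> \<beta> \<in> GG n \<alpha>"
| GG_comp: "g \<in> GG n \<alpha> \<Longrightarrow> h \<in> GG n \<alpha> \<Longrightarrow> g \<circ> h \<in> GG n \<alpha>"
| GG_inv: "g \<in> GG n \<alpha> \<Longrightarrow> inv g \<in> GG n \<alpha>"

text \<open>Elements (eta, g, mu) of the inverse semigroup (the zero plays no role for germs).\<close>
type_synonym triple = "fword \<times> aut \<times> fword"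

definition valid_triple :: "nat \<Rightarrow> 'f::field \<Rightarrow> triple \<Rightarrow> bool" where
  "valid_triple n \<alpha> s = (fst (snd s) \<in> GG n \<alpha>)"

definition germ_eq :: "triple \<Rightarrow> iword \<Rightarrow> triple \<Rightarrow> iword \<Rightarrow> bool" where
  "germ_eq s w s' w' =
     (case s of (\<eta>, g, \<mu>) \<Rightarrow> case s' of (\<eta>', g', \<mu>') \<Rightarrow>
       w = w' \<and>
       (\<exists>k \<epsilon> \<epsilon>'. ipref k w = \<mu> @ \<epsilon> \<and> ipref k w = \<mu>' @ \<epsilon>' \<and>
          \<eta> @ g \<epsilon> = \<eta>' @ g' \<epsilon>' \<and> restr g \<epsilon> = restr g' \<epsilon>'))"

text \<open>The germ [s,w], represented as its equivalence class of pairs (s',w').\<close>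
definition germ :: "nat \<Rightarrow> 'f::field \<Rightarrow> triple \<Rightarrow> iword \<Rightarrow> (triple \<times> iword) set" where
  "germ n \<alpha> s w = {(s', w'). valid_triple n \<alpha> s' \<and> w' \<in> cyl (snd (snd s')) \<and> germ_eq s w s' w'}"

definition Theta :: "nat \<Rightarrow> 'f::field \<Rightarrow> triple \<Rightarrow> iword set \<Rightarrow> (triple \<times> iword) set set" where
  "Theta n \<alpha> s U = {germ n \<alpha> s w | w. w \<in> U}"

definition Um :: "nat \<Rightarrow> 'f::field \<Rightarrow> nat \<Rightarrow> aut \<Rightarrow> (triple \<times> iword) set set" where
  "Um n \<alpha> m g = Theta n \<alpha> ([], g, []) (cyl (ones m))"

definition N0 :: "nat \<Rightarrow> 'f::field \<Rightarrow> aut set" where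
  "N0 n \<alpha> = range (iota n \<alpha>)"

definition HH :: "nat \<Rightarrow> 'f::field \<Rightarrow> nat \<Rightarrow> aut set" where
  "HH n \<alpha> j = iota n \<alpha> ` {\<beta>. tr n (\<alpha> ^ j * \<beta>) = 0}"

definition MK :: "nat \<Rightarrow> 'f::field \<Rightarrow> nat \<Rightarrow> aut set \<Rightarrow> (triple \<times> iword) set set" where
  "MK n \<alpha> m K = (\<Inter>g\<in>K. Um n \<alpha> m g) - (\<Union>h\<in>N0 n \<alpha> - K. Um n \<alpha> m h)"

end

theory Submission imports Defs "HOL-Computational_Algebra.Polynomial" begin


lemma fermat_ff:
  fixes x :: "'f::{field,finite}"
  assumes "x \<noteq> 0"
  shows "x ^ (card (UNIV::'f set) - 1) = 1"
proof -
  let ?U = "UNIV - {0::'f}"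
  have bij: "bij_betw ((*) x) ?U ?U"
  proof -
    have "inj_on ((*) x) ?U" using assms by (auto simp: inj_on_def)
    moreover have "(*) x ` ?U = ?U"
    proof
      show "(*) x ` ?U \<subseteq> ?U" using assms by auto
      show "?U \<subseteq> (*) x ` ?U"
      proof
        fix y assume "y \<in> ?U"
        then have "y = x * (inverse x * y)" "inverse x * y \<in> ?U" using assms by (auto simp: field_simps)
        then show "y \<in> (*) x ` ?U" by blast
      qed
    qed
    ultimately show ?thesis unfolding bij_betw_def by blast
  qed
  have "(\<Prod>y\<in>?U. x * y) = (\<Prod>y\<in>?U. y)"
    using prod.reindex_bij_betw[OF bij, of "\<lambda>y. y"] by simp
  moreover have "(\<Prod>y\<in>?U. x * y) = x ^ card ?U * (\<Prod>y\<in>?U. y)"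
    by (simp add: prod.distrib)
  moreover have "(\<Prod>y\<in>?U. y) \<noteq> 0" by simp
  moreover have "card ?U = card (UNIV::'f set) - 1" by (simp add: card_Diff_singleton)
  ultimately show ?thesis by simp
qed

lemma pow_card_ff:
  fixes x :: "'f::{field,finite}"
  shows "x ^ card (UNIV::'f set) = x"
proof (cases "x = 0")
  case True
  have "card (UNIV::'f set) > 0" by (simp add: card_gt_0_iff)
  then show ?thesis using True by (simp add: power_0_left)
next
  case False
  have "card (UNIV::'f set) > 0" by (simp add: card_gt_0_iff)
  then have "card (UNIV::'f set) = Suc (card (UNIV::'f set) - 1)" by simp
  then have "x ^ card (UNIV::'f set) = x * x ^ (card (UNIV::'f set) - 1)" by (metis power_Suc)
  then show ?thesis using fermat_ff[OF False] by simp
qed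

lemma char2:
  assumes "card (UNIV::'f::{field,finite} set) = 2 ^ n" "n \<ge> 1"
  shows "(1::'f) + 1 = 0"
proof -
  have p: "(-1::'f) ^ (2^n) = -1" using pow_card_ff[of "-1::'f"] assms(1) by simp
  have ev: "even ((2::nat)^n)" using assms by simp
  have e: "(-1::'f) ^ (2^n) = 1" using ev by (rule neg_one_even_power)
  have m: "(-1::'f) = 1" by (rule trans[OF sym[OF p] e])
  have "(1::'f) + -1 = 0" by simp
  then show ?thesis by (simp only: m)
qed

lemma two_zero:
  assumes "card (UNIV::'f::{field,finite} set) = 2 ^ n" "n \<ge> 1"
  shows "(2::'f) = 0"
  by (subst one_add_one[symmetric]) (rule char2[OF assms])

lemma frob_add:
  assumes "card (UNIV::'f::{field,finite} set) = 2 ^ n" "n \<ge> 1"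
  shows "((x::'f) + y) ^ (2^i) = x ^ (2^i) + y ^ (2^i)"
proof (induction i)
  case 0 then show ?case by simp
next
  case (Suc i)
  have "(x + y) ^ (2 ^ Suc i) = ((x+y)^(2^i))^2" by (simp add: power_mult[symmetric] mult.commute)
  also have "\<dots> = (x ^ (2^i) + y^(2^i))^2" using Suc by simp
  also have "\<dots> = (x ^ (2^i))^2 + (y^(2^i))^2"
    by (simp add: power2_sum two_zero[OF assms])
  also have "\<dots> = x ^ (2 ^ Suc i) + y ^ (2 ^ Suc i)" by (simp add: power_mult[symmetric] mult.commute)
  finally show ?case .
qed

lemma tr_add:
  assumes "card (UNIV::'f::{field,finite} set) = 2 ^ n" "n \<ge> 1"
  shows "tr n ((x::'f) + y) = tr n x + tr n y"
  unfolding tr_def by (simp add: frob_add[OF assms] sum.distrib)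

lemma sq_sum:
  assumes "card (UNIV::'f::{field,finite} set) = 2 ^ n" "n \<ge> 1"
  shows "(\<Sum>i<(k::nat). (f i::'f))^2 = (\<Sum>i<k. (f i)^2)"
  using frob_add[OF assms, of _ _ 1] by (induction k) auto

lemma tr_sq:
  assumes "card (UNIV::'f::{field,finite} set) = 2 ^ n" "n \<ge> 1"
  shows "(tr n (x::'f))^2 = tr n x"
proof -
  let ?f = "\<lambda>i. x ^ (2^i)"
  have "(tr n x)^2 = (\<Sum>i<n. (?f i)^2)" unfolding tr_def by (rule sq_sum[OF assms])
  also have "\<dots> = (\<Sum>i<n. ?f (Suc i))" by (simp add: power_mult[symmetric] mult.commute)
  finally have 1: "(tr n x)^2 = (\<Sum>i<n. ?f (Suc i))" .
  have "?f 0 + (\<Sum>i<n. ?f (Suc i)) = (\<Sum>i<n. ?f i) + ?f n"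
    using sum.lessThan_Suc_shift[of ?f n] sum.lessThan_Suc[of ?f n] by simp
  moreover have "?f n = x" using pow_card_ff[of x] assms by simp
  ultimately have "(\<Sum>i<n. ?f (Suc i)) = (\<Sum>i<n. ?f i)" by simp
  then show ?thesis using 1 by (simp add: tr_def)
qed

lemma tr_01:
  assumes "card (UNIV::'f::{field,finite} set) = 2 ^ n" "n \<ge> 1"
  shows "tr n (x::'f) = 0 \<or> tr n x = 1"
proof -
  have "tr n x * (tr n x - 1) = 0" using tr_sq[OF assms, of x]
    by (simp add: power2_eq_square algebra_simps)
  then show ?thesis by auto
qed

lemma tr_nonzero:
  assumes "card (UNIV::'f::{field,finite} set) = 2 ^ n" "n \<ge> 1"
  shows "\<exists>z::'f. tr n z = 1"
proof -
  define p :: "'f poly" where "p = (\<Sum>i<n. monom 1 (2^i))"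
  have ev: "poly p x = tr n x" for x by (simp add: p_def poly_sum poly_monom tr_def)
  have inj: "inj (\<lambda>i::nat. (2::nat)^i)" by (simp add: inj_on_def)
  have "coeff p (2^(n-1)) = (\<Sum>i<n. if 2^i = (2::nat)^(n-1) then 1 else 0)"
    by (simp add: p_def coeff_sum coeff_monom)
  also have "\<dots> = (\<Sum>i\<in>{n-1}. 1)"
    using assms(2) by (intro sum.mono_neutral_cong_right) auto
  finally have c: "coeff p (2^(n-1)) = 1" by simp
  then have p0: "p \<noteq> 0" by auto
  have "degree p \<le> 2^(n-1)" unfolding p_def
    by (rule degree_sum_le) (auto intro: order.trans[OF degree_monom_le])
  moreover have "2^(n-1) < (2::nat)^n" using assms(2) by simp
  ultimately have "card {x. poly p x = 0} < card (UNIV::'f set)"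
    using card_poly_roots_bound[OF p0] assms(1) by linarith
  then have "{x. poly p x = 0} \<noteq> UNIV" by auto
  then obtain z where "poly p z \<noteq> 0" by auto
  then show ?thesis using tr_01[OF assms, of z] ev by auto
qed



lemma iota_ones_False:
  "iota n \<alpha> \<beta> (ones i @ False # u) = ones i @ False # (if tr n (\<alpha>^i*\<beta>) = 1 then a_aut u else u)"
  by (induction i arbitrary: \<beta>) (auto simp: ones_def mult_ac)

lemma drop_ones: "k \<le> l \<Longrightarrow> drop k (ones l @ v) = ones (l - k) @ v"
  by (simp add: ones_def)

lemma ones_add: "ones k @ ones l @ v = ones (k + l) @ v"
  by (simp add: ones_def replicate_add)

lemma restr_at: "restr g e = restr g' e \<Longrightarrow> drop (length e) (g (e @ v)) = drop (length e) (g' (e @ v))"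
  unfolding restr_def by (drule fun_cong[of _ _ v]) simp

lemma len_ones[simp]: "length (ones k) = k" by (simp add: ones_def)

lemma drop_Suc_ones: "drop (Suc i) (ones i @ False # X) = X" by (simp add: ones_def)

lemma X_eq:
  assumes "(if P then a_aut [False] else [False]) = (if Q then a_aut [False] else [False])"
  shows "P = Q"
  using assms by (auto split: if_splits)

lemma restr_ones:
  assumes "restr (iota n \<alpha> \<gamma>) (ones k) = restr (iota n \<alpha> \<beta>) (ones k)" "k \<le> l"
  shows "(tr n (\<alpha>^l*\<gamma>) = 1) = (tr n (\<alpha>^l*\<beta>) = 1)"
proof -
  have "drop k (iota n \<alpha> \<gamma> (ones k @ ones (l-k) @ [False,False])) = drop k (iota n \<alpha> \<beta> (ones k @ ones (l-k) @ [False,False]))"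
    using restr_at[OF assms(1), of "ones (l-k) @ [False,False]"] by simp
  moreover have "ones k @ ones (l-k) @ [False,False] = ones l @ [False, False]"
    using ones_add[of k "l-k"] assms(2) by simp
  ultimately have "drop k (iota n \<alpha> \<gamma> (ones l @ False # [False])) = drop k (iota n \<alpha> \<beta> (ones l @ False # [False]))"
    by simp
  then have "drop k (ones l @ False # (if tr n (\<alpha>^l*\<gamma>) = 1 then a_aut [False] else [False]))
     = drop k (ones l @ False # (if tr n (\<alpha>^l*\<beta>) = 1 then a_aut [False] else [False]))"
    by (simp only: iota_ones_False)
  then have "ones (l-k) @ False # (if tr n (\<alpha>^l*\<gamma>) = 1 then a_aut [False] else [False])
     = ones (l-k) @ False # (if tr n (\<alpha>^l*\<beta>) = 1 then a_aut [False] else [False])"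
    by (simp only: drop_ones[OF assms(2)])
  then have "(if tr n (\<alpha>^l*\<gamma>) = 1 then a_aut [False] else [False]) = (if tr n (\<alpha>^l*\<beta>) = 1 then a_aut [False] else [False])"
    by simp
  then show ?thesis by (rule X_eq)
qed

lemma iota_inj_tr:
  assumes "iota n \<alpha> \<gamma> = iota n \<alpha> \<beta>"
  shows "(tr n (\<alpha>^l*\<gamma>) = 1) = (tr n (\<alpha>^l*\<beta>) = 1)"
  using restr_ones[of n \<alpha> \<gamma> 0 \<beta> l] assms by (simp add: ones_def)

lemma ipref_ones: "(\<forall>l<k. w l) \<Longrightarrow> ipref k w = ones k"
  by (simp add: ipref_def ones_def list_eq_iff_nth_eq)

lemma ipref_split:
  assumes "\<forall>l<i. w l" "\<not> w i" "i < k"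
  shows "ipref k w = ones i @ False # map w [Suc i..<k]"
proof -
  have "[0..<k] = [0..<i] @ [i..<k]" using upt_add_eq_append[of 0 i "k-i"] assms(3) by simp
  also have "[i..<k] = i # [Suc i..<k]" using assms(3) by (rule upt_conv_Cons)
  finally have "ipref k w = map w [0..<i] @ w i # map w [Suc i..<k]" by (simp add: ipref_def)
  moreover have "map w [0..<i] = ones i" using ipref_ones[of i w] assms(1) by (simp add: ipref_def)
  ultimately show ?thesis using assms(2) by simp
qed

lemma A1:
  assumes "germ_eq ([], iota n \<alpha> \<gamma>, []) w ([], iota n \<alpha> \<beta>, []) w"
    and "\<forall>l<i. w l" "\<not> w i"
  shows "(tr n (\<alpha>^i*\<gamma>) = 1) = (tr n (\<alpha>^i*\<beta>) = 1)"
proof -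
  from assms(1) obtain k where
    e: "iota n \<alpha> \<gamma> (ipref k w) = iota n \<alpha> \<beta> (ipref k w)" and
    r: "restr (iota n \<alpha> \<gamma>) (ipref k w) = restr (iota n \<alpha> \<beta>) (ipref k w)"
    unfolding germ_eq_def by auto
  show ?thesis
  proof (cases "k \<le> i")
    case True
    then have "ipref k w = ones k" using assms(2) by (intro ipref_ones) auto
    then show ?thesis using restr_ones[of n \<alpha> \<gamma> k \<beta> i] r True by simp
  next
    case False
    define u where "u = map w [Suc i..<k]"
    have p: "ipref k w = ones i @ False # u" unfolding u_def
      using False assms(2,3) by (intro ipref_split) auto
    show ?thesis
    proof (cases "u = []")
      case True
      have "restr (iota n \<alpha> \<gamma>) (ipref k w) [False] = restr (iota n \<alpha> \<beta>) (ipref k w) [False]"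
        using r by simp
      have "drop (length (ipref k w)) (iota n \<alpha> \<gamma> (ipref k w @ [False])) = drop (length (ipref k w)) (iota n \<alpha> \<beta> (ipref k w @ [False]))"
        by (rule restr_at[OF r])
      then have "drop (Suc i) (iota n \<alpha> \<gamma> (ones i @ False # [False])) = drop (Suc i) (iota n \<alpha> \<beta> (ones i @ False # [False]))"
        unfolding p True by simp
      then have "drop (Suc i) (ones i @ False # (if tr n (\<alpha>^i*\<gamma>) = 1 then a_aut [False] else [False]))
     = drop (Suc i) (ones i @ False # (if tr n (\<alpha>^i*\<beta>) = 1 then a_aut [False] else [False]))"
        by (simp only: iota_ones_False)
      then show ?thesis unfolding drop_Suc_ones by (rule X_eq)
    next
      case False
      then obtain c u' where u: "u = c # u'" by (cases u) auto
      from e show ?thesis unfolding p u by (simp add: iota_ones_False split: if_splits)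
    qed
  qed
qed

lemma A2:
  assumes "germ_eq ([], iota n \<alpha> \<gamma>, []) w ([], iota n \<alpha> \<beta>, []) w"
    and "\<forall>l. w l" "\<alpha>^d = 1" "0 < d"
  shows "(tr n (\<alpha>^j*\<gamma>) = 1) = (tr n (\<alpha>^j*\<beta>) = 1)"
proof -
  from assms(1) obtain k where
    r: "restr (iota n \<alpha> \<gamma>) (ipref k w) = restr (iota n \<alpha> \<beta>) (ipref k w)"
    unfolding germ_eq_def by auto
  have "ipref k w = ones k" using assms(2) by (intro ipref_ones) auto
  moreover have "k \<le> j + d * k" using assms(4) by (cases d) auto
  ultimately have "(tr n (\<alpha>^(j + d*k)*\<gamma>) = 1) = (tr n (\<alpha>^(j + d * k)*\<beta>) = 1)"
    using restr_ones[of n \<alpha> \<gamma> k \<beta>] r by simp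
  moreover have "\<alpha>^(j + d*k) = \<alpha>^j" using assms(3) by (simp add: power_add power_mult)
  ultimately show ?thesis by simp
qed

lemma germ_self:
  "((([]::fword), iota n \<alpha> \<beta>, ([]::fword)), w) \<in> germ n \<alpha> ([], iota n \<alpha> \<beta>, []) w"
proof -
  have "w \<in> cyl []" unfolding cyl_def conc_def by auto
  moreover have "germ_eq ([], iota n \<alpha> \<beta>, []) w ([], iota n \<alpha> \<beta>, []) w"
    unfolding germ_eq_def by (auto intro!: exI[of _ 0] simp: ipref_def)
  ultimately show ?thesis unfolding germ_def valid_triple_def by (auto intro: GG_iota)
qed

lemma germ_same:
  assumes "germ n \<alpha> ([], iota n \<alpha> \<beta>, []) w' = germ n \<alpha> ([], iota n \<alpha> \<gamma>, []) w"
  shows "germ_eq ([], iota n \<alpha> \<gamma>, []) w ([], iota n \<alpha> \<beta>, []) w \<and> w' = w"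
proof -
  have "((([]::fword), iota n \<alpha> \<beta>, ([]::fword)), w') \<in> germ n \<alpha> ([], iota n \<alpha> \<gamma>, []) w"
    using germ_self[of n \<alpha> \<beta> w'] assms by simp
  then have g: "germ_eq ([], iota n \<alpha> \<gamma>, []) w ([], iota n \<alpha> \<beta>, []) w'"
    unfolding germ_def by simp
  then have "w = w'" unfolding germ_eq_def by simp
  with g show ?thesis by simp
qed

theorem mainTheorem5:
  fixes \<alpha> :: "'f::{field, finite}" and n m j :: nat and K :: "aut set"
  assumes "n \<ge> 2"
    and "card (UNIV :: 'f set) = 2 ^ n"
    and "\<forall>\<beta>::'f. \<beta> \<noteq> 0 \<longrightarrow> (\<exists>k. \<beta> = \<alpha> ^ k)"
    and "m \<ge> 1"
    and "j \<le> 2 ^ n - 2"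
    and "K = HH n \<alpha> j \<or> K = N0 n \<alpha> - HH n \<alpha> j"
  shows "MK n \<alpha> m K = (\<Inter>g\<in>K. Um n \<alpha> m g)"
proof -
  have n1: "n \<ge> 1" using assms(1) by simp
  note cd = assms(2) n1
  have c4: "card (UNIV :: 'f set) \<ge> 4"
  proof -
    have "(2::nat)^2 \<le> 2^n" using assms(1) by (intro power_increasing) auto
    then show ?thesis using assms(2) by simp
  qed
  have a0: "\<alpha> \<noteq> 0"
  proof
    assume "\<alpha> = 0"
    then have "UNIV \<subseteq> {0, 1::'f}" using assms(3) by (auto simp: power_0_left split: if_splits)
    then have "card (UNIV :: 'f set) \<le> card {0, 1::'f}" by (intro card_mono) auto
    also have "\<dots> \<le> 2" by (simp add: card_insert_le_m1)
    finally show False using c4 by simp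
  qed
  define d where "d = card (UNIV :: 'f set) - 1"
  have d1: "\<alpha>^d = 1" "0 < d" using fermat_ff[OF a0] c4 by (auto simp: d_def)
  define T where "T l y = tr n (\<alpha>^l * y)" for l and y :: 'f
  have Tadd: "T l (x + y) = T l x + T l y" for l x y
    unfolding T_def by (simp add: distrib_left tr_add[OF cd])
  have T01: "T l y = 0 \<or> T l y = 1" for l y unfolding T_def by (rule tr_01[OF cd])
  have T0: "T l 0 = 0" for l
    by (simp add: T_def tr_def power_0_left)
  have c2: "(1::'f) + 1 = 0" by (rule char2[OF cd])
  have Tne: "\<exists>y. T l y = 1" for l
  proof -
    obtain z :: 'f where "tr n z = 1" using tr_nonzero[OF cd] by blast
    moreover have "\<alpha>^l * (inverse (\<alpha>^l) * z) = z" using a0 by simp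
    ultimately show ?thesis unfolding T_def by metis
  qed
  have key: False if x: "x \<in> (\<Inter>g\<in>K. Um n \<alpha> m g)" and h: "h \<in> N0 n \<alpha> - K" "x \<in> Um n \<alpha> m h" for x h
  proof -
    from h(2) obtain w where xw: "x = germ n \<alpha> ([], h, []) w"
      unfolding Um_def Theta_def by auto
    define i where "i = (if \<forall>l. w l then j else (LEAST l. \<not> w l))"
    have same: "(T i \<gamma> = 1) = (T i \<beta> = 1)" if "h = iota n \<alpha> \<gamma>" "iota n \<alpha> \<beta> \<in> K" for \<gamma> \<beta>
    proof -
      from x that(2) have "x \<in> Um n \<alpha> m (iota n \<alpha> \<beta>)" by blast
      then obtain w' where "x = germ n \<alpha> ([], iota n \<alpha> \<beta>, []) w'"
        unfolding Um_def Theta_def by auto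
      then have ge: "germ_eq ([], iota n \<alpha> \<gamma>, []) w ([], iota n \<alpha> \<beta>, []) w"
        using germ_same[of n \<alpha> \<beta> w' \<gamma> w] xw that(1) by simp
      show ?thesis
      proof (cases "\<forall>l. w l")
        case True
        then show ?thesis using A2[OF ge True d1] by (simp add: i_def T_def)
      next
        case False
        then have ex: "\<exists>l. \<not> w l" by simp
        have "\<not> w i" using LeastI_ex[OF ex] False by (simp add: i_def)
        moreover have "\<forall>l<i. w l" using not_less_Least False by (auto simp: i_def)
        ultimately show ?thesis using A1[OF ge] by (simp add: T_def)
      qed
    qed
    obtain y0 where y0: "T i y0 = 1" using Tne by blast
    show False
    proof (cases "K = HH n \<alpha> j")
      case True
      from h(1) obtain \<gamma> where g: "h = iota n \<alpha> \<gamma>" unfolding N0_def by auto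
      have "T j \<gamma> \<noteq> 0" using h(1) g True unfolding HH_def T_def by auto
      then have gj: "T j \<gamma> = 1" using T01 by blast
      have inK: "iota n \<alpha> \<beta> \<in> K" if "T j \<beta> = 0" for \<beta>
        using that True unfolding HH_def T_def by auto
      have "T i \<gamma> \<noteq> 1" using same[OF g inK[of 0]] T0 by simp
      then have gi: "T i \<gamma> = 0" using T01 by blast
      have "T i y = 0" for y
      proof (cases "T j y = 0")
        case True
        then show ?thesis using same[OF g inK[OF True]] gi T01 by force
      next
        case False
        then have "T j y = 1" using T01 by blast
        then have "T j (y + \<gamma>) = 0" using Tadd gj c2 by simp
        then have "T i (y + \<gamma>) = 0" using same[OF g inK] gi T01 by force
        then show ?thesis using Tadd gi by simp
      qed
      then show False using y0 by simp
    next
      case False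
      then have K: "K = N0 n \<alpha> - HH n \<alpha> j" using assms(6) by simp
      then have "h \<in> HH n \<alpha> j" using h(1) by simp
      then obtain \<gamma> where g: "h = iota n \<alpha> \<gamma>" and gj: "T j \<gamma> = 0"
        unfolding HH_def T_def by auto
      have inK: "iota n \<alpha> \<beta> \<in> K" if "T j \<beta> = 1" for \<beta>
      proof -
        have "iota n \<alpha> \<beta> \<notin> HH n \<alpha> j"
        proof
          assume "iota n \<alpha> \<beta> \<in> HH n \<alpha> j"
          then obtain \<beta>' where "iota n \<alpha> \<beta> = iota n \<alpha> \<beta>'" "T j \<beta>' = 0"
            unfolding HH_def T_def by auto
          then show False using iota_inj_tr[of n \<alpha> \<beta> \<beta>' j] that by (simp add: T_def)
        qed
        then show ?thesis using K unfolding N0_def by auto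
      qed
      obtain b0 where b0: "T j b0 = 1" using Tne by blast
      have z: "T i y = 0" if "T j y = 0" for y
      proof -
        have "T j (y + b0) = 1" using that b0 Tadd by simp
        then have "(T i (y + b0) = 1) = (T i b0 = 1)"
          using same[OF g inK] same[OF g inK[OF b0]] by simp
        then have "T i (y + b0) = T i b0" using T01 by metis
        then show ?thesis using Tadd by simp
      qed
      have gi: "T i \<gamma> = 0" using z gj by simp
      have "T i y = 0" for y
      proof (cases "T j y = 0")
        case True
        then show ?thesis using z by simp
      next
        case False
        then have "T j y = 1" using T01 by blast
        then show ?thesis using same[OF g inK] gi T01 by force
      qed
      then show False using y0 by simp
    qed
  qed
  show ?thesis unfolding MK_def using key by blast
qed

end
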